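(* Let $P=(x_i,y_i)_{i=1}^k$ be point pairs in $\mathbb P^2\times\mathbb P^2$, let $Z$ be the $k\times 9$ matrix with rows $x_i^\top\otimes y_i^\top$, and let $\mathcal N_Z\subset\mathbb P(\mathbb C^{3\times3})$ be its projective nullspace. Suppose $\mathcal N_Z$ contains a generic line $\ell$, passing through the three rank-two matrices $F_1,F_2,F_3$. Then for every $j\in\{1,2,3\}$ there is no index $i$ with both $y_i^\top F_j=0$ and $F_jx_i=0$.
   Context: Work over $\mathbb C$; identify $\mathbb C^{3\times3}$ with $\mathbb C^9$ by column-stacking so that $(x^\top\otimes y^\top)\operatorname{vec}(M)=y^\top Mx$. A line in $\mathbb P(\mathbb C^{3\times3})$ is generic if it contains exactly three rank-two matrices. *)

theory Defs
  imports "HOL-Analysis.Analysis"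
begin

text \<open>Points of P^2 are represented by nonzero vectors in complex^3; 3x3 matrices are complex^3^3
  (row index first: M $ a $ b is the entry in row a, column b).\<close>

definition smat :: "complex \<Rightarrow> complex^3^3 \<Rightarrow> complex^3^3" where
  "smat c M = (\<chi> i j. c * M $ i $ j)"

text \<open>The bilinear form y^T M x, which equals (x^T (kron) y^T) vec(M) under column stacking.\<close>
definition bilin :: "complex^3 \<Rightarrow> complex^3^3 \<Rightarrow> complex^3 \<Rightarrow> complex" where
  "bilin y M x = (\<Sum>a\<in>UNIV. \<Sum>b\<in>UNIV. y $ a * M $ a $ b * x $ b)"

definition nullZ :: "nat \<Rightarrow> (nat \<Rightarrow> complex^3) \<Rightarrow> (nat \<Rightarrow> complex^3) \<Rightarrow> (complex^3^3) set" where
  "nullZ k x y = {M. \<forall>i<k. bilin (y i) M (x i) = 0}"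

text \<open>The projective line through the independent matrices A and B (affine cone: the complex span).\<close>
definition line_span :: "complex^3^3 \<Rightarrow> complex^3^3 \<Rightarrow> (complex^3^3) set" where
  "line_span A B = {smat a A + smat b B | a b. True}"

definition lin_indep2 :: "complex^3^3 \<Rightarrow> complex^3^3 \<Rightarrow> bool" where
  "lin_indep2 A B \<longleftrightarrow> (\<forall>a b. smat a A + smat b B = 0 \<longrightarrow> a = 0 \<and> b = 0)"

definition projpt :: "complex^3^3 \<Rightarrow> (complex^3^3) set" where
  "projpt M = {smat c M | c. c \<noteq> 0}"

definition rank2_points :: "complex^3^3 \<Rightarrow> complex^3^3 \<Rightarrow> (complex^3^3) set set" where
  "rank2_points A B = projpt ` {M \<in> line_span A B. M \<noteq> 0 \<and> rank M = 2}"

definition generic_line :: "complex^3^3 \<Rightarrow> complex^3^3 \<Rightarrow> bool" where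
  "generic_line A B \<longleftrightarrow> lin_indep2 A B \<and> finite (rank2_points A B) \<and> card (rank2_points A B) = 3"

end

theory Submission
  imports Defs
begin
definition n1 :: "3 \<Rightarrow> 3" where "n1 i = (if i = 1 then 2 else if i = 2 then 3 else 1)"
definition n2 :: "3 \<Rightarrow> 3" where "n2 i = (if i = 1 then 3 else if i = 2 then 1 else 2)"
definition cof :: "complex^3^3 \<Rightarrow> 3 \<Rightarrow> 3 \<Rightarrow> complex" where
 "cof M i j = M$(n1 i)$(n1 j) * M$(n2 i)$(n2 j) - M$(n1 i)$(n2 j) * M$(n2 i)$(n1 j)"
definition TT :: "complex^3^3 \<Rightarrow> complex^3^3 \<Rightarrow> complex" where
 "TT P Q = (\<Sum>i\<in>UNIV. \<Sum>j\<in>UNIV. cof P i j * Q$i$j)"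
lemma det_expand: "det (smat s F + smat t G) = s^3 * det F + s^2 * t * TT F G + s * t^2 * TT G F + t^3 * det G"
  apply (simp add: det_3 smat_def TT_def cof_def n1_def n2_def sum_3)
  apply algebra
  done
lemma cof_eqs:
  "cof M 1 1 = M$2$2 * M$3$3 - M$2$3 * M$3$2"
  "cof M 1 2 = M$2$3 * M$3$1 - M$2$1 * M$3$3"
  "cof M 1 3 = M$2$1 * M$3$2 - M$2$2 * M$3$1"
  "cof M 2 1 = M$3$2 * M$1$3 - M$3$3 * M$1$2"
  "cof M 2 2 = M$3$3 * M$1$1 - M$3$1 * M$1$3"
  "cof M 2 3 = M$3$1 * M$1$2 - M$3$2 * M$1$1"
  "cof M 3 1 = M$1$2 * M$2$3 - M$1$3 * M$2$2"
  "cof M 3 2 = M$1$3 * M$2$1 - M$1$1 * M$2$3"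
  "cof M 3 3 = M$1$1 * M$2$2 - M$1$2 * M$2$1"
  by (simp_all add: cof_def n1_def n2_def)

lemma cross_par:
  fixes a b c d e f x1 x2 x3 :: complex
  assumes "a*x1+b*x2+c*x3=0" "d*x1+e*x2+f*x3=0"
  shows "(b*f-c*e)*x2 = (c*d-a*f)*x1" "(b*f-c*e)*x3 = (a*e-b*d)*x1" "(c*d-a*f)*x3 = (a*e-b*d)*x2"
  using assms by algebra+

lemma sym3:
  fixes w x :: "3 \<Rightarrow> complex"
  assumes "w 1 * x 2 = w 2 * x 1" "w 1 * x 3 = w 3 * x 1" "w 2 * x 3 = w 3 * x 2"
  shows "w j * x c = w c * x j"
  using exhaust_3[of j] exhaust_3[of c] assms by auto

lemma cof_x:
  assumes "F *v x = 0" shows "cof F i j * x$c = cof F i c * x$j"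
proof -
  have h: "\<forall>r. F$r$1 * x$1 + F$r$2 * x$2 + F$r$3 * x$3 = 0"
    using assms by (simp add: vec_eq_iff matrix_vector_mult_def sum_3)
  have h1: "F$1$1 * x$1 + F$1$2 * x$2 + F$1$3 * x$3 = 0" using h by blast
  have h2: "F$2$1 * x$1 + F$2$2 * x$2 + F$2$3 * x$3 = 0" using h by blast
  have h3: "F$3$1 * x$1 + F$3$2 * x$2 + F$3$3 * x$3 = 0" using h by blast
  have "\<And>i. cof F i 1 * x$2 = cof F i 2 * x$1 \<and> cof F i 1 * x$3 = cof F i 3 * x$1 \<and> cof F i 2 * x$3 = cof F i 3 * x$2"
  proof -
    fix i :: 3
    show "cof F i 1 * x$2 = cof F i 2 * x$1 \<and> cof F i 1 * x$3 = cof F i 3 * x$1 \<and> cof F i 2 * x$3 = cof F i 3 * x$2"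
      using exhaust_3[of i] cross_par[OF h2 h3] cross_par[OF h3 h1] cross_par[OF h1 h2]
      by (elim disjE; hypsubst; unfold cof_eqs; blast)
  qed
  then show ?thesis using sym3[of "cof F i" "\<lambda>k. x$k"] by blast
qed

lemma cof_transpose: "cof (transpose F) j i = cof F i j"
  using exhaust_3[of i] exhaust_3[of j]
  by (elim disjE; simp add: cof_eqs transpose_def mult.commute)

lemma cof_y:
  assumes "y v* F = 0" shows "cof F i j * y$d = cof F d j * y$i"
proof -
  have "transpose F *v y = 0" using assms by simp
  from cof_x[OF this, of j i d] show ?thesis by (simp add: cof_transpose)
qed
lemma TT_zero:
  assumes "F *v x = 0" "y v* F = 0" "x \<noteq> 0" "y \<noteq> 0" "bilin y G x = 0"
  shows "TT F G = 0"
proof -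
  obtain c where c: "x$c \<noteq> 0" using assms(3) by (metis vec_eq_iff zero_index)
  obtain d where d: "y$d \<noteq> 0" using assms(4) by (metis vec_eq_iff zero_index)
  have e: "cof F i j * (x$c * y$d) = cof F d c * (y$i * x$j)" for i j
    by (metis (no_types, lifting) ab_semigroup_mult_class.mult_ac(1) cof_x[OF assms(1)] cof_y[OF assms(2)] mult.commute)
  have "TT F G * (x$c * y$d) = (\<Sum>i\<in>UNIV. \<Sum>j\<in>UNIV. cof F i j * (x$c * y$d) * G$i$j)"
    unfolding TT_def sum_distrib_right by (simp add: algebra_simps)
  also have "\<dots> = (\<Sum>i\<in>UNIV. \<Sum>j\<in>UNIV. cof F d c * (y$i * G$i$j * x$j))"
    unfolding e by (simp add: algebra_simps)
  also have "\<dots> = cof F d c * bilin y G x"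
    unfolding bilin_def sum_distrib_left ..
  finally show ?thesis using assms(5) c d by simp
qed

lemma rank3_iff: "rank (M::complex^3^3) = 3 \<longleftrightarrow> det M \<noteq> 0"
proof -
  have "rank M = 3 \<longleftrightarrow> vec.span (rows M) = UNIV"
    by (simp add: row_rank_def_gen vec.dim_eq_full[symmetric] vec.dimension_def card_cart_basis)
  also have "\<dots> \<longleftrightarrow> invertible M"
    by (simp add: invertible_left_inverse matrix_left_invertible_span_rows_gen)
  also have "\<dots> \<longleftrightarrow> det M \<noteq> 0" by (rule invertible_det_nz)
  finally show ?thesis .
qed

lemma rank_le3: "rank (M::complex^3^3) \<le> 3"
  unfolding row_rank_def_gen using dim_subset_UNIV_cart_gen[of "rows M"] by simp

lemma cof_nz_rank_ge2:
  assumes "cof M i j \<noteq> 0" shows "rank M \<ge> 2"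
proof -
  let ?u = "row (n1 i) M" and ?v = "row (n2 i) M"
  have m: "cof M i j = ?u$(n1 j) * ?v$(n2 j) - ?u$(n2 j) * ?v$(n1 j)"
    by (simp add: cof_def row_def)
  have uv: "?u \<noteq> ?v" using assms m by (auto simp: mult.commute)
  have v0: "?v \<noteq> 0" using assms m by auto
  have nu: "?u \<notin> vec.span {?v}"
  proof
    assume "?u \<in> vec.span {?v}"
    then obtain c where "?u = c *s ?v" by (auto simp: vec.span_singleton)
    then show False using assms m by (simp add: algebra_simps)
  qed
  have ind: "vec.independent {?u, ?v}"
    using nu v0 by (simp add: vec.independent_insert uv)
  have "card {?u, ?v} \<le> vec.dim (rows M)"
    by (rule vec.independent_card_le_dim[OF _ ind]) (auto simp: rows_def)
  then show ?thesis using uv by (simp add: row_rank_def_gen)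
qed

lemma minor0:
  assumes "\<forall>a b. cof M a b = 0" shows "M$i$j * M$p$q = M$i$q * M$p$j"
proof -
  have e: "M$2$2 * M$3$3 = M$2$3 * M$3$2" "M$2$3 * M$3$1 = M$2$1 * M$3$3" "M$2$1 * M$3$2 = M$2$2 * M$3$1"
   "M$3$2 * M$1$3 = M$3$3 * M$1$2" "M$3$3 * M$1$1 = M$3$1 * M$1$3" "M$3$1 * M$1$2 = M$3$2 * M$1$1"
   "M$1$2 * M$2$3 = M$1$3 * M$2$2" "M$1$3 * M$2$1 = M$1$1 * M$2$3" "M$1$1 * M$2$2 = M$1$2 * M$2$1"
    using assms[rule_format, of 1 1] assms[rule_format, of 1 2] assms[rule_format, of 1 3]
      assms[rule_format, of 2 1] assms[rule_format, of 2 2] assms[rule_format, of 2 3]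
      assms[rule_format, of 3 1] assms[rule_format, of 3 2] assms[rule_format, of 3 3]
    unfolding cof_eqs right_minus_eq by blast+
  show ?thesis
    using exhaust_3[of i] exhaust_3[of j] exhaust_3[of p] exhaust_3[of q]
    by (elim disjE; hypsubst; (simp add: mult.commute; fail)?; metis e mult.commute)
qed

lemma rank_le1:
  assumes "\<forall>a b. cof M a b = 0" shows "rank M \<le> 1"
proof (cases "M = 0")
  case True
  have "rows M \<subseteq> vec.span {0}" by (auto simp: rows_def row_def True vec_eq_iff vec.span_base)
  then have "vec.dim (rows M) \<le> card ({0}::(complex^3) set)" by (intro vec.dim_le_card) auto
  then show ?thesis by (simp add: row_rank_def_gen)
next
  case False
  then obtain p q where pq: "M$p$q \<noteq> 0" by (metis vec_eq_iff zero_index)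
  have "rows M \<subseteq> vec.span {row p M}"
  proof
    fix r assume "r \<in> rows M"
    then obtain i where r: "r = row i M" by (auto simp: rows_def)
    have "r = (M$i$q / M$p$q) *s row p M"
      unfolding r vec_eq_iff using minor0[OF assms, of i _ p q] pq
      by (auto simp: row_def field_simps)
    then show "r \<in> vec.span {row p M}" by (auto simp: vec.span_singleton)
  qed
  then have "vec.dim (rows M) \<le> card {row p M}" by (intro vec.dim_le_card) auto
  then show ?thesis by (simp add: row_rank_def_gen)
qed

lemma rank2_iff: "rank (M::complex^3^3) = 2 \<longleftrightarrow> det M = 0 \<and> (\<exists>a b. cof M a b \<noteq> 0)"
  using rank3_iff[of M] rank_le3[of M] rank_le1[of M] cof_nz_rank_ge2[of M]
  by (metis One_nat_def Suc_1 le_antisym le_neq_implies_less less_Suc_eq_le not_less_eq_eq numeral_3_eq_3)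

lemma smat_entry[simp]: "smat c M $ i $ j = c * M $ i $ j"
  by (simp add: smat_def)

lemma smat_smat: "smat a (smat b M) = smat (a*b) M"
  by (simp add: vec_eq_iff)

lemma smat_zero_iff: "smat c M = 0 \<longleftrightarrow> c = 0 \<or> M = 0"
  by (auto simp: vec_eq_iff)

lemma projpt_smat: "c \<noteq> 0 \<Longrightarrow> projpt (smat c M) = projpt M"
  unfolding projpt_def
proof (safe)
  fix d :: complex assume "c \<noteq> 0" "d \<noteq> 0"
  then show "\<exists>e. smat d (smat c M) = smat e M \<and> e \<noteq> 0"
    by (intro exI[of _ "d*c"]) (simp add: smat_smat)
next
  fix d :: complex assume "c \<noteq> 0" "d \<noteq> 0"
  then show "\<exists>e. smat d M = smat e (smat c M) \<and> e \<noteq> 0"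
    by (intro exI[of _ "d/c"]) (simp add: smat_smat)
qed

lemma cof_expand: "cof (smat s F + smat t G) a b = s^2 * cof F a b + s * t *
  (F$(n1 a)$(n1 b) * G$(n2 a)$(n2 b) + G$(n1 a)$(n1 b) * F$(n2 a)$(n2 b)
   - F$(n1 a)$(n2 b) * G$(n2 a)$(n1 b) - G$(n1 a)$(n2 b) * F$(n2 a)$(n1 b)) + t^2 * cof G a b"
  by (simp add: cof_def power2_eq_square algebra_simps)

lemma det_F_line:
  assumes "det F = 0" "TT F G = 0"
  shows "det (smat s F + smat t G) = t^2 * (s * TT G F + t * det G)"
  using det_expand[of s F t G] assms by (simp add: power2_eq_square power3_eq_cube algebra_simps)

lemma core:
  assumes indep: "lin_indep2 F G" and bz: "bilin y G x = 0"
    and Fx: "F *v x = 0" and yF: "y v* F = 0" and x0: "x \<noteq> 0" and y0: "y \<noteq> 0"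
    and rk: "rank F = 2" and fin: "finite (rank2_points F G)" and c3: "card (rank2_points F G) = 3"
  shows False
proof -
  have T0: "TT F G = 0" by (rule TT_zero[OF Fx yF x0 y0 bz])
  have dF: "det F = 0" and cF: "\<exists>a b. cof F a b \<noteq> 0" using rk rank2_iff by auto
  define c where "c = TT G F"
  define d where "d = det G"
  have dl: "det (smat s F + smat t G) = t^2 * (s * c + t * d)" for s t
    unfolding c_def d_def by (rule det_F_line[OF dF T0])
  show False
  proof (cases "c = 0 \<and> d = 0")
    case False
    define H where "H = smat d F + smat (-c) G"
    have sub: "rank2_points F G \<subseteq> {projpt F, projpt H}"
    proof
      fix P assume "P \<in> rank2_points F G"
      then obtain M where P: "P = projpt M" and M: "M \<in> line_span F G" "M \<noteq> 0" "rank M = 2"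
        unfolding rank2_points_def by auto
      obtain s t where st: "M = smat s F + smat t G" using M(1) unfolding line_span_def by auto
      have "det M = 0" using M(3) rank2_iff by auto
      then have e: "t^2 * (s * c + t * d) = 0" using dl st by simp
      show "P \<in> {projpt F, projpt H}"
      proof (cases "t = 0")
        case True
        then have "M = smat s F" using st by (simp add: vec_eq_iff)
        moreover have "s \<noteq> 0" using M(2) \<open>M = smat s F\<close> by (auto simp: smat_zero_iff)
        ultimately show ?thesis using P projpt_smat by simp
      next
        case tnz: False
        then have e2: "s * c + t * d = 0" using e by simp
        have cnz: "c \<noteq> 0" using False e2 tnz by auto
        have hs: "s = - (t * d) / c" using e2 cnz by (simp add: field_simps eq_neg_iff_add_eq_0)
        have "M = smat (-t/c) H" unfolding st H_def hs
          using cnz by (simp add: vec_eq_iff field_simps)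
        then show ?thesis using P projpt_smat tnz cnz by simp
      qed
    qed
    have "card (rank2_points F G) \<le> card {projpt F, projpt H}"
      by (rule card_mono[OF _ sub]) simp
    also have "\<dots> \<le> 2" by (simp add: card_insert_le_m1)
    finally show False using c3 by simp
  next
    case True
    obtain a b where ab: "cof F a b \<noteq> 0" using cF by auto
    define K where "K = F$(n1 a)$(n1 b) * G$(n2 a)$(n2 b) + G$(n1 a)$(n1 b) * F$(n2 a)$(n2 b)
       - F$(n1 a)$(n2 b) * G$(n2 a)$(n1 b) - G$(n1 a)$(n2 b) * F$(n2 a)$(n1 b)"
    define p where "p = [:cof F a b, K, cof G a b:]"
    define Mu where "Mu u = smat 1 F + smat u G" for u
    have cofMu: "cof (Mu u) a b = poly p u" for u
      unfolding Mu_def p_def K_def cof_expand by (simp add: algebra_simps power2_eq_square)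
    have p0: "p \<noteq> 0" using ab by (simp add: p_def)
    have finr: "finite {u. poly p u = 0}" by (rule poly_roots_finite[OF p0])
    define U where "U = {u. poly p u \<noteq> 0}"
    have infU: "infinite U"
    proof
      assume "finite U"
      then have "finite (U \<union> {u. poly p u = 0})" using finr by simp
      moreover have "U \<union> {u. poly p u = 0} = UNIV" by (auto simp: U_def)
      ultimately show False using infinite_UNIV_char_0[where 'a=complex] by simp
    qed
    have inU: "projpt (Mu u) \<in> rank2_points F G" if "u \<in> U" for u
    proof -
      have cnz: "cof (Mu u) a b \<noteq> 0" using that cofMu by (simp add: U_def)
      have dz: "det (Mu u) = 0" unfolding Mu_def dl using True by simp
      have r2: "rank (Mu u) = 2" using rank2_iff cnz dz by blast
      have nz: "Mu u \<noteq> 0" using cnz by (auto simp: cof_def)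
      have "Mu u \<in> line_span F G" unfolding Mu_def line_span_def by blast
      then show ?thesis unfolding rank2_points_def using r2 nz by blast
    qed
    have inj: "inj_on (\<lambda>u. projpt (Mu u)) U"
    proof
      fix u v assume "u \<in> U" "v \<in> U" and eq: "projpt (Mu u) = projpt (Mu v)"
      have "Mu u \<in> projpt (Mu u)" unfolding projpt_def
        by (rule CollectI, rule exI[of _ 1]) (simp add: vec_eq_iff)
      then obtain e where e: "Mu u = smat e (Mu v)" using eq unfolding projpt_def by auto
      have "smat (1 - e) F + smat (u - e * v) G = 0"
        using e unfolding Mu_def by (simp add: vec_eq_iff algebra_simps)
      then have "1 - e = 0" "u - e * v = 0" using indep unfolding lin_indep2_def by blast+
      then show "u = v" by simp
    qed
    have "infinite ((\<lambda>u. projpt (Mu u)) ` U)" using infU inj finite_imageD by blast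
    moreover have "(\<lambda>u. projpt (Mu u)) ` U \<subseteq> rank2_points F G" using inU by blast
    ultimately show False using fin finite_subset by blast
  qed
qed

lemma basis_change:
  assumes ind: "lin_indep2 A B" and a: "a \<noteq> 0"
  shows "lin_indep2 (smat a A + smat b B) B \<and> line_span (smat a A + smat b B) B = line_span A B"
proof
  show "lin_indep2 (smat a A + smat b B) B"
    unfolding lin_indep2_def
  proof (intro allI impI)
    fix s t assume "smat s (smat a A + smat b B) + smat t B = 0"
    then have "smat (s*a) A + smat (s*b + t) B = 0" by (simp add: vec_eq_iff algebra_simps)
    then have "s*a = 0" "s*b + t = 0" using ind unfolding lin_indep2_def by blast+
    then show "s = 0 \<and> t = 0" using a by simp
  qed
  show "line_span (smat a A + smat b B) B = line_span A B"
    unfolding line_span_def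
  proof (safe)
    fix s t
    show "\<exists>s' t'. smat s (smat a A + smat b B) + smat t B = smat s' A + smat t' B \<and> True"
      by (intro exI[of _ "s*a"] exI[of _ "s*b+t"]) (simp add: vec_eq_iff algebra_simps)
    show "\<exists>s' t'. smat s A + smat t B = smat s' (smat a A + smat b B) + smat t' B \<and> True"
      using a by (intro exI[of _ "s/a"] exI[of _ "t - s*b/a"]) (simp add: vec_eq_iff field_simps)
  qed
qed

lemma lin_indep2_sym: "lin_indep2 A B \<Longrightarrow> lin_indep2 B A"
  unfolding lin_indep2_def by (metis add.commute)

lemma line_span_sym: "line_span A B = line_span B A"
  unfolding line_span_def by (metis add.commute)

lemma find_G:
  assumes ind: "lin_indep2 A B" and F: "F \<in> line_span A B" and F0: "F \<noteq> 0"
  shows "\<exists>G. lin_indep2 F G \<and> line_span F G = line_span A B"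
proof -
  obtain a b where ab: "F = smat a A + smat b B" using F unfolding line_span_def by auto
  show ?thesis
  proof (cases "a = 0")
    case False
    then show ?thesis using basis_change[OF ind False, of b] ab by blast
  next
    case True
    then have b: "b \<noteq> 0" using F0 ab by (auto simp: vec_eq_iff)
    have "F = smat b B + smat a A" using ab by (simp add: add.commute)
    then show ?thesis using basis_change[OF lin_indep2_sym[OF ind] b, of a] line_span_sym by metis
  qed
qed

theorem mainTheorem15:
  fixes k :: nat and x y :: "nat \<Rightarrow> complex^3" and A B :: "complex^3^3"
  assumes "\<forall>i<k. x i \<noteq> 0 \<and> y i \<noteq> 0"
    and "lin_indep2 A B"
    and "line_span A B \<subseteq> nullZ k x y"
    and "generic_line A B"
  shows "\<forall>F \<in> line_span A B. F \<noteq> 0 \<and> rank F = 2 \<longrightarrow>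
           \<not> (\<exists>i<k. y i v* F = 0 \<and> F *v x i = 0)"
proof (intro ballI impI notI)
  fix F assume F: "F \<in> line_span A B" and Fr: "F \<noteq> 0 \<and> rank F = 2"
    and ex: "\<exists>i<k. y i v* F = 0 \<and> F *v x i = 0"
  then obtain i where i: "i < k" "y i v* F = 0" "F *v x i = 0" by blast
  obtain G where G: "lin_indep2 F G" "line_span F G = line_span A B"
    using find_G[OF assms(2) F] Fr by blast
  have r2: "rank2_points F G = rank2_points A B" unfolding rank2_points_def G(2) ..
  have "G \<in> line_span F G" unfolding line_span_def
    by (rule CollectI, intro exI[of _ 0] exI[of _ 1]) (simp add: vec_eq_iff)
  then have "G \<in> nullZ k x y" using assms(3) G(2) by blast
  then have bz: "bilin (y i) G (x i) = 0" using i(1) unfolding nullZ_def by blast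
  show False
    using core[OF G(1) bz i(3) i(2)] assms(1) i(1) Fr assms(4) r2
    unfolding generic_line_def by auto
qed

end
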